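(* Let $A$ be an injective compact self-adjoint operator with simple spectrum on a separable Hilbert space $H$, and suppose there are $x,y\in H$ such that $Vu=Au+\langle u,x\rangle y$ ($u\in H$) is quasi-nilpotent, with $y\notin\operatorname{Ran}(A)$. Define $\mathscr{D}(D)=\operatorname{Ran}(A)+\mathbb{C}y$ and $D(Au+cy)=u$ for $u\in H$, $c\in\mathbb{C}$. Then $(D,V)$ is an admissible pair.
   Context: A pair $(D,V)$ of operators on a separable Hilbert space $H$ is called admissible if: (i) $D:\mathscr{D}(D)\subset H\to H$ is a densely defined closed linear operator; (ii) $\dim\ker D=1$; (iii) $D$ has a self-adjoint restriction with compact resolvent; (iv) $V:H\to H$ is a compact operator with $\sigma(V)=\{0\}$; (v) $\operatorname{Ran}V\subset\mathscr{D}(D)$ and $DV=I$. *)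

theory Defs
  imports "HOL-Analysis.Analysis"
begin

class complex_inner = real_normed_vector +
  fixes scaleC :: "complex \<Rightarrow> 'a \<Rightarrow> 'a" (infixr "*\<^sub>C" 75)
    and cinner :: "'a \<Rightarrow> 'a \<Rightarrow> complex"
  assumes scaleC_add_right: "a *\<^sub>C (x + y) = a *\<^sub>C x + a *\<^sub>C y"
    and scaleC_add_left: "(a + b) *\<^sub>C x = a *\<^sub>C x + b *\<^sub>C x"
    and scaleC_scaleC: "a *\<^sub>C (b *\<^sub>C x) = (a * b) *\<^sub>C x"
    and scaleC_one: "1 *\<^sub>C x = x"
    and scaleR_scaleC: "scaleR r x = complex_of_real r *\<^sub>C x"
    and cinner_add_left: "cinner (x + y) z = cinner x z + cinner y z"
    and cinner_scaleC_left: "cinner (a *\<^sub>C x) y = a * cinner x y"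
    and cinner_commute: "cinner y x = cnj (cinner x y)"
    and cinner_self_nonneg: "0 \<le> Re (cinner x x)"
    and cinner_eq_zero_iff: "cinner x x = 0 \<longleftrightarrow> x = 0"
    and norm_eq_sqrt_cinner: "norm x = sqrt (Re (cinner x x))"

class chilbert = complex_inner + complete_space

definition csubspace :: "'a::complex_inner set \<Rightarrow> bool" where
  "csubspace S \<longleftrightarrow> 0 \<in> S \<and> (\<forall>x\<in>S. \<forall>y\<in>S. x + y \<in> S) \<and> (\<forall>c. \<forall>x\<in>S. c *\<^sub>C x \<in> S)"

definition clinear_on :: "'a::complex_inner set \<Rightarrow> ('a \<Rightarrow> 'a) \<Rightarrow> bool" where
  "clinear_on S T \<longleftrightarrow> csubspace S \<and>
     (\<forall>x\<in>S. \<forall>y\<in>S. T (x + y) = T x + T y) \<and> (\<forall>c. \<forall>x\<in>S. T (c *\<^sub>C x) = c *\<^sub>C T x)"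

definition clinear :: "('a::complex_inner \<Rightarrow> 'a) \<Rightarrow> bool" where
  "clinear T \<longleftrightarrow> (\<forall>x y. T (x + y) = T x + T y) \<and> (\<forall>c x. T (c *\<^sub>C x) = c *\<^sub>C T x)"

definition bounded_clinear :: "('a::complex_inner \<Rightarrow> 'a) \<Rightarrow> bool" where
  "bounded_clinear T \<longleftrightarrow> clinear T \<and> (\<exists>K. \<forall>x. norm (T x) \<le> norm x * K)"

definition compact_op :: "('a::complex_inner \<Rightarrow> 'a) \<Rightarrow> bool" where
  "compact_op T \<longleftrightarrow> clinear T \<and> compact (closure (T ` ball 0 1))"

definition self_adjoint_bdd :: "('a::complex_inner \<Rightarrow> 'a) \<Rightarrow> bool" where
  "self_adjoint_bdd T \<longleftrightarrow> bounded_clinear T \<and> (\<forall>x y. cinner (T x) y = cinner x (T y))"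

definition spectrum :: "('a::complex_inner \<Rightarrow> 'a) \<Rightarrow> complex set" where
  "spectrum T = {l. \<not> (\<exists>S. bounded_clinear S \<and> (\<forall>x. S (T x - l *\<^sub>C x) = x)
                                   \<and> (\<forall>x. T (S x) - l *\<^sub>C S x = x))}"

definition quasi_nilpotent :: "('a::complex_inner \<Rightarrow> 'a) \<Rightarrow> bool" where
  "quasi_nilpotent T \<longleftrightarrow> bounded_clinear T \<and> spectrum T = {0}"

definition simple_spectrum :: "('a::complex_inner \<Rightarrow> 'a) \<Rightarrow> bool" where
  "simple_spectrum T \<longleftrightarrow>
     (\<forall>l u v. T u = l *\<^sub>C u \<and> T v = l *\<^sub>C v \<and> v \<noteq> 0 \<longrightarrow> (\<exists>c. u = c *\<^sub>C v))"

definition separable_space :: "'a::complex_inner itself \<Rightarrow> bool" where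
  "separable_space _ \<longleftrightarrow> (\<exists>S::'a set. countable S \<and> closure S = UNIV)"

definition densely_defined :: "'a::complex_inner set \<Rightarrow> ('a \<Rightarrow> 'a) \<Rightarrow> bool" where
  "densely_defined Dom T \<longleftrightarrow> clinear_on Dom T \<and> closure Dom = UNIV"

definition closed_op :: "'a::complex_inner set \<Rightarrow> ('a \<Rightarrow> 'a) \<Rightarrow> bool" where
  "closed_op Dom T \<longleftrightarrow> closed {(x, T x) | x. x \<in> Dom}"

definition op_kernel :: "'a::complex_inner set \<Rightarrow> ('a \<Rightarrow> 'a) \<Rightarrow> 'a set" where
  "op_kernel Dom T = {x \<in> Dom. T x = 0}"

definition dim_one :: "'a::complex_inner set \<Rightarrow> bool" where
  "dim_one S \<longleftrightarrow> (\<exists>e. e \<noteq> 0 \<and> S = {c *\<^sub>C e | c. True})"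

definition adjoint_dom :: "'a::complex_inner set \<Rightarrow> ('a \<Rightarrow> 'a) \<Rightarrow> 'a set" where
  "adjoint_dom Dom T = {y. \<exists>z. \<forall>x\<in>Dom. cinner (T x) y = cinner x z}"

definition self_adjoint_op :: "'a::complex_inner set \<Rightarrow> ('a \<Rightarrow> 'a) \<Rightarrow> bool" where
  "self_adjoint_op Dom T \<longleftrightarrow> densely_defined Dom T
     \<and> (\<forall>x\<in>Dom. \<forall>y\<in>Dom. cinner (T x) y = cinner x (T y))
     \<and> adjoint_dom Dom T = Dom"

definition compact_resolvent :: "'a::complex_inner set \<Rightarrow> ('a \<Rightarrow> 'a) \<Rightarrow> bool" where
  "compact_resolvent Dom T \<longleftrightarrow> (\<exists>l R. compact_op R
      \<and> (\<forall>x. R x \<in> Dom \<and> T (R x) - l *\<^sub>C R x = x)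
      \<and> (\<forall>x\<in>Dom. R (T x - l *\<^sub>C x) = x))"

definition admissible :: "'a::complex_inner set \<Rightarrow> ('a \<Rightarrow> 'a) \<Rightarrow> ('a \<Rightarrow> 'a) \<Rightarrow> bool" where
  "admissible DomD D V \<longleftrightarrow>
     densely_defined DomD D \<and> closed_op DomD D
   \<and> dim_one (op_kernel DomD D)
   \<and> (\<exists>Dom0 \<subseteq> DomD. self_adjoint_op Dom0 D \<and> compact_resolvent Dom0 D)
   \<and> compact_op V \<and> spectrum V = {0}
   \<and> (\<forall>u. V u \<in> DomD) \<and> (\<forall>u. D (V u) = u)"

end

theory Submission
  imports Defs
begin



lemma scaleC_zero_left [simp]: "0 *\<^sub>C (x::'a::complex_inner) = 0"
proof -
  have "0 *\<^sub>C x = complex_of_real 0 *\<^sub>C x" by simp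
  also have "\<dots> = 0 *\<^sub>R x" by (rule scaleR_scaleC[symmetric])
  finally show ?thesis by simp
qed

lemma scaleC_zero_right [simp]: "c *\<^sub>C (0::'a::complex_inner) = 0"
  using scaleC_add_right[of c 0 0] by simp

lemma scaleC_minus_left: "(- c) *\<^sub>C (x::'a::complex_inner) = - (c *\<^sub>C x)"
proof -
  have "(- c) *\<^sub>C x + c *\<^sub>C x = 0" using scaleC_add_left[of "-c" c x] by simp
  thus ?thesis by (simp add: eq_neg_iff_add_eq_0)
qed

lemma scaleC_minus_right: "c *\<^sub>C (- (x::'a::complex_inner)) = - (c *\<^sub>C x)"
proof -
  have "c *\<^sub>C (- x) + c *\<^sub>C x = 0" using scaleC_add_right[of c "-x" x] by simp
  thus ?thesis by (simp add: eq_neg_iff_add_eq_0)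
qed

lemma scaleC_diff_left: "(a - b) *\<^sub>C (x::'a::complex_inner) = a *\<^sub>C x - b *\<^sub>C x"
  using scaleC_add_left[of a "-b" x] scaleC_minus_left[of b x] by simp

lemma scaleC_diff_right: "c *\<^sub>C ((x::'a::complex_inner) - y) = c *\<^sub>C x - c *\<^sub>C y"
  using scaleC_add_right[of c x "-y"] scaleC_minus_right[of c y] by simp

lemma cinner_zero_left [simp]: "cinner 0 y = 0"
  using cinner_add_left[of 0 0 y] by simp

lemma cinner_add_right: "cinner x (y + z) = cinner x y + cinner x z"
proof -
  have "cinner x (y + z) = cnj (cinner (y + z) x)" by (rule cinner_commute)
  also have "\<dots> = cnj (cinner y x) + cnj (cinner z x)" by (simp only: cinner_add_left complex_cnj_add)
  also have "\<dots> = cinner x y + cinner x z" by (simp only: cinner_commute[where x=y and y=x, symmetric] cinner_commute[where x=z and y=x, symmetric])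
  finally show ?thesis .
qed

lemma cinner_scaleC_right: "cinner x (c *\<^sub>C y) = cnj c * cinner x y"
proof -
  have "cinner x (c *\<^sub>C y) = cnj (cinner (c *\<^sub>C y) x)" by (rule cinner_commute)
  also have "\<dots> = cnj c * cnj (cinner y x)" by (simp only: cinner_scaleC_left complex_cnj_mult)
  also have "\<dots> = cnj c * cinner x y" by (simp only: cinner_commute[where x=y and y=x, symmetric])
  finally show ?thesis .
qed

lemma cinner_zero_right [simp]: "cinner x 0 = 0"
  using cinner_add_right[of x 0 0] by simp

lemma cinner_minus_left: "cinner (- x) y = - cinner x y"
proof -
  have "cinner (- x) y + cinner x y = 0" using cinner_add_left[of "-x" x y] by simp
  thus ?thesis by (rule iffD2[OF eq_neg_iff_add_eq_0])
qed

lemma cinner_minus_right: "cinner x (- y) = - cinner x y"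
proof -
  have "cinner x (- y) + cinner x y = 0" using cinner_add_right[of x "-y" y] by simp
  thus ?thesis by (rule iffD2[OF eq_neg_iff_add_eq_0])
qed

lemma cinner_diff_left: "cinner (x - y) z = cinner x z - cinner y z"
  using cinner_add_left[of x "-y" z] cinner_minus_left[of y z] by simp

lemma cinner_diff_right: "cinner x (y - z) = cinner x y - cinner x z"
  using cinner_add_right[of x y "-z"] cinner_minus_right[of x z] by simp

lemma cinner_self_real: "cinner x x = complex_of_real (Re (cinner x x))"
proof -
  have h: "cinner x x = cnj (cinner x x)" by (rule cinner_commute)
  have "Im (cinner x x) = - Im (cinner x x)" using arg_cong[OF h, of Im] by simp
  hence "Im (cinner x x) = 0" by simp
  thus ?thesis by (simp add: complex_eq_iff)
qed

lemma norm_sq: "(norm (x::'a::complex_inner))^2 = Re (cinner x x)"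
  using norm_eq_sqrt_cinner[of x] cinner_self_nonneg[of x] by simp

lemma norm_scaleC: "norm (c *\<^sub>C x) = cmod c * norm x"
proof -
  have "cinner (c *\<^sub>C x) (c *\<^sub>C x) = c * cnj c * cinner x x"
    by (simp add: cinner_scaleC_left cinner_scaleC_right mult.assoc)
  also have "c * cnj c = complex_of_real ((cmod c)^2)"
    using complex_norm_square[of c] by simp
  finally have "Re (cinner (c *\<^sub>C x) (c *\<^sub>C x)) = (cmod c)^2 * Re (cinner x x)"
    by (subst cinner_self_real) (simp del: of_real_power)
  hence "norm (c *\<^sub>C x) = sqrt ((cmod c)^2 * Re (cinner x x))"
    by (simp only: norm_eq_sqrt_cinner[of "c *\<^sub>C x"])
  also have "\<dots> = sqrt ((cmod c)^2) * sqrt (Re (cinner x x))" by (rule real_sqrt_mult)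
  also have "\<dots> = cmod c * norm x" by (simp add: norm_eq_sqrt_cinner[of x])
  finally show ?thesis .
qed

lemma Re_cinner_scaleR_right: "Re (cinner x (r *\<^sub>R (y::'a::complex_inner))) = r * Re (cinner x y)"
  by (simp add: scaleR_scaleC cinner_scaleC_right)

lemma Re_cinner_sym: "Re (cinner y x) = Re (cinner x y)"
  by (subst cinner_commute) simp

lemma norm_add_sq: "(norm (a + b))^2 = (norm a)^2 + (norm b)^2 + 2 * Re (cinner a b)"
  by (simp add: norm_sq cinner_add_left cinner_add_right Re_cinner_sym[of b a])

lemma norm_diff_sq: "(norm (a - b))^2 = (norm a)^2 + (norm b)^2 - 2 * Re (cinner a b)"
  by (simp add: norm_sq cinner_diff_left cinner_diff_right Re_cinner_sym[of b a])

lemma cinner_self_eq_0: "cinner x x = 0 \<Longrightarrow> x = 0"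
  by (rule iffD1[OF cinner_eq_zero_iff])

lemma clinear_linear: "clinear T \<Longrightarrow> linear T"
  unfolding clinear_def
  by (auto intro!: linearI simp: scaleR_scaleC)

lemma bounded_clinear_bounded_linear: "bounded_clinear T \<Longrightarrow> bounded_linear T"
  unfolding bounded_clinear_def clinear_def
  by (auto intro!: bounded_linear_intro simp: scaleR_scaleC)

lemma bounded_linear_scaleC_left: "bounded_linear (\<lambda>c::complex. c *\<^sub>C (y::'a::complex_inner))"
  by (rule bounded_linear_intro[where K="norm y"])
     (auto simp: scaleC_add_left scaleR_scaleC scaleC_scaleC norm_scaleC scaleR_conv_of_real)

lemma bounded_linear_scaleC_right: "bounded_linear (\<lambda>y::'a::complex_inner. c *\<^sub>C y)"
  by (rule bounded_linear_intro[where K="cmod c"])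
     (auto simp: scaleC_add_right scaleR_scaleC scaleC_scaleC norm_scaleC mult.commute)



lemma closure_add_mem:
  fixes S :: "'a::real_normed_vector set"
  assumes "subspace S" "p \<in> closure S" "v \<in> S"
  shows "p + v \<in> closure S"
proof -
  have "(\<lambda>q. q + v) ` closure S \<subseteq> closure S"
  proof (rule image_closure_subset)
    show "continuous_on (closure S) (\<lambda>q. q + v)" by (intro continuous_intros)
    show "closed (closure S)" by simp
    show "(\<lambda>q. q + v) ` S \<subseteq> closure S"
      using assms(1,3) closure_subset[of S] subspace_add[OF assms(1)] by blast
  qed
  thus ?thesis using assms(2) by auto
qed

lemma par_bound:
  fixes z a b :: "'a::complex_inner"
  assumes "(dist z a)^2 < d^2 + \<alpha>" "(dist z b)^2 < d^2 + \<beta>"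
    and "d \<le> dist z ((1/2) *\<^sub>R (a + b))" "0 \<le> d"
  shows "(norm (a - b))^2 \<le> 2 * \<alpha> + 2 * \<beta>"
proof -
  define u where "u = z - a"
  define v where "v = z - b"
  have s: "(norm (u + v))^2 + (norm (u - v))^2 = 2 * (norm u)^2 + 2 * (norm v)^2"
    using norm_add_sq[of u v] norm_diff_sq[of u v] by simp
  have "u + v = 2 *\<^sub>R (z - (1/2) *\<^sub>R (a + b))"
    unfolding u_def v_def by (simp add: algebra_simps scaleR_2)
  hence "norm (u + v) = 2 * dist z ((1/2) *\<^sub>R (a + b))"
    by (simp add: dist_norm)
  hence "2 * d \<le> norm (u + v)" using assms(3) by simp
  hence "(2 * d)^2 \<le> (norm (u + v))^2" using assms(4) by (intro power_mono) auto
  moreover have "u - v = b - a" unfolding u_def v_def by simp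
  moreover have "(norm u)^2 < d^2 + \<alpha>" "(norm v)^2 < d^2 + \<beta>"
    using assms(1,2) unfolding u_def v_def by (simp_all add: dist_norm)
  ultimately have "(norm (b - a))^2 \<le> 2 * \<alpha> + 2 * \<beta>" using s
    by (simp add: power_mult_distrib)
  thus ?thesis by (simp add: norm_minus_commute)
qed

lemma orth_approx:
  fixes S :: "'a::chilbert set" and z :: 'a
  assumes S: "subspace S"
  shows "\<exists>p\<in>closure S. \<forall>w\<in>S. Re (cinner (z - p) w) = 0"
proof -
  define d where "d = infdist z S"
  have ne: "S \<noteq> {}" using subspace_0[OF S] by auto
  have d0: "0 \<le> d" unfolding d_def by (rule infdist_nonneg)
  have lb: "d \<le> dist z q" if "q \<in> S" for q
    unfolding d_def using that by (rule infdist_le)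
  have lbc: "d \<le> dist z q" if "q \<in> closure S" for q
  proof -
    have "closure S \<subseteq> {q. d \<le> dist z q}"
      by (rule closure_minimal) (use lb in \<open>auto intro!: closed_Collect_le continuous_intros\<close>)
    thus ?thesis using that by auto
  qed
  have approx: "\<exists>m\<in>S. (dist z m)^2 < d^2 + e" if e: "e > 0" for e
  proof -
    define r where "r = sqrt (d^2 + e)"
    have "d < r" unfolding r_def using e d0
      by (metis add_less_cancel_left add_0_right real_less_rsqrt power2_eq_square)
    hence "(INF a\<in>S. dist z a) < r" using ne unfolding d_def by (simp add: infdist_notempty)
    then obtain m where m: "m \<in> S" "dist z m < r"
      using ne by (subst (asm) cINF_less_iff) (auto intro: bdd_belowI[where m=0])
    have "(dist z m)^2 < r^2" using m(2) by (intro power_strict_mono) auto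
    also have "r^2 = d^2 + e" unfolding r_def using e d0 by simp
    finally show ?thesis using m(1) by blast
  qed
  have "\<forall>n. \<exists>m\<in>S. (dist z m)^2 < d^2 + inverse (real (Suc n))"
    using approx by simp
  then obtain m where m: "\<And>n. m n \<in> S" "\<And>n. (dist z (m n))^2 < d^2 + inverse (real (Suc n))"
    by metis
  have mid: "(1/2) *\<^sub>R (m i + m j) \<in> S" for i j
    using S m(1) by (intro subspace_scale subspace_add) auto
  have bnd: "(dist (m i) (m j))^2 \<le> 2 * inverse (real (Suc i)) + 2 * inverse (real (Suc j))" for i j
    using par_bound[OF m(2)[of i] m(2)[of j] lb[OF mid] d0] by (simp add: dist_norm)
  have "Cauchy m"
  proof (rule metric_CauchyI)
    fix e :: real assume e: "0 < e"
    obtain N :: nat where N: "4 / e^2 < real N" using reals_Archimedean2 by blast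
    have eN: "4 / real (Suc N) < e^2"
    proof -
      have "4 < e^2 * real N" using N e by (simp add: field_simps)
      also have "\<dots> \<le> e^2 * real (Suc N)" using e by simp
      finally show ?thesis by (simp add: field_simps)
    qed
    show "\<exists>M. \<forall>i\<ge>M. \<forall>j\<ge>M. dist (m i) (m j) < e"
    proof (intro exI allI impI)
      fix i j assume ij: "N \<le> i" "N \<le> j"
      have "inverse (real (Suc i)) \<le> inverse (real (Suc N))"
        using ij by (intro le_imp_inverse_le) auto
      moreover have "inverse (real (Suc j)) \<le> inverse (real (Suc N))"
        using ij by (intro le_imp_inverse_le) auto
      ultimately have "2 * inverse (real (Suc i)) + 2 * inverse (real (Suc j)) \<le> 4 * inverse (real (Suc N))"
        by linarith
      moreover have "4 * inverse (real (Suc N)) = 4 / real (Suc N)" by (simp add: divide_inverse)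
      ultimately have "(dist (m i) (m j))^2 < e^2"
        using bnd[of i j] eN by linarith
      thus "dist (m i) (m j) < e" using e
        by (meson abs_le_square_iff abs_of_nonneg less_le_not_le nle_le zero_le_dist power2_less_imp_less)
    qed
  qed
  then obtain p where p: "m \<longlonglongrightarrow> p" using Cauchy_convergent_iff convergent_def by blast
  have pS: "p \<in> closure S" using m(1) p by (auto simp: closure_sequential)
  have "(dist z p)^2 \<le> d^2"
  proof (rule LIMSEQ_le)
    show "(\<lambda>n. (dist z (m n))^2) \<longlonglongrightarrow> (dist z p)^2"
      using p by (intro tendsto_intros)
    show "(\<lambda>n. d^2 + inverse (real (Suc n))) \<longlonglongrightarrow> d^2"
      using tendsto_add[OF tendsto_const LIMSEQ_inverse_real_of_nat] by simp
    show "\<exists>N. \<forall>n\<ge>N. (dist z (m n))^2 \<le> d^2 + inverse (real (Suc n))"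
      using m(2) less_imp_le by blast
  qed
  hence ep: "(norm (z - p))^2 \<le> d^2" by (simp add: dist_norm)
  have "Re (cinner (z - p) w) = 0" if w: "w \<in> S" for w
  proof -
    define r where "r = Re (cinner (z - p) w)"
    define q where "q = (norm w)^2"
    have var: "2 * t * r \<le> t^2 * q" for t
    proof -
      have "p + t *\<^sub>R w \<in> closure S"
        using closure_add_mem[OF S pS subspace_scale[OF S w]] .
      hence "d \<le> norm (z - p - t *\<^sub>R w)" using lbc by (simp add: dist_norm diff_diff_add)
      hence "d^2 \<le> (norm (z - p - t *\<^sub>R w))^2" using d0 by (intro power_mono) auto
      also have "\<dots> = (norm (z - p))^2 + t^2 * q - 2 * (t * r)"
        unfolding norm_diff_sq q_def r_def by (simp add: Re_cinner_scaleR_right power_mult_distrib)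
      finally show ?thesis using ep by simp
    qed
    show ?thesis
    proof (cases "w = 0")
      case True thus ?thesis by simp
    next
      case False
      hence q: "q > 0" unfolding q_def by simp
      have "2 * (r / q) * r \<le> (r / q)^2 * q" by (rule var)
      hence "2 * r^2 / q \<le> r^2 / q" using q by (simp add: power2_eq_square field_simps)
      hence "r^2 \<le> 0" using q by (simp add: divide_right_mono field_simps)
      thus ?thesis unfolding r_def by simp
    qed
  qed
  thus ?thesis using pS by blast
qed



theorem proposition2p3:
  fixes A :: "'a::chilbert \<Rightarrow> 'a" and x y :: 'a and D :: "'a \<Rightarrow> 'a"
  assumes "separable_space TYPE('a)"
    and "compact_op A" and "self_adjoint_bdd A" and "inj A" and "simple_spectrum A"
    and "quasi_nilpotent (\<lambda>u. A u + cinner u x *\<^sub>C y)"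
    and "y \<notin> range A"
    and "\<And>u c. D (A u + c *\<^sub>C y) = u"
  shows "admissible {A u + c *\<^sub>C y | u c. True} D (\<lambda>u. A u + cinner u x *\<^sub>C y)"
proof -
  define V where "V = (\<lambda>u. A u + cinner u x *\<^sub>C y)"
  define Dom where "Dom = {A u + c *\<^sub>C y | u c. True}"
  have sa: "bounded_clinear A" and sym: "\<And>u v. cinner (A u) v = cinner u (A v)"
    using assms(3) by (auto simp: self_adjoint_bdd_def)
  have Aadd: "\<And>u v. A (u + v) = A u + A v" and Asc: "\<And>c u. A (c *\<^sub>C u) = c *\<^sub>C A u"
    using sa by (auto simp: bounded_clinear_def clinear_def)
  have lin: "bounded_linear A" using sa by (rule bounded_clinear_bounded_linear)
  have A0: "A 0 = 0" using Asc[of 0 0] by simp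
  have Ddef: "\<And>u c. D (A u + c *\<^sub>C y) = u" by (rule assms(8))
  have DA: "\<And>u. D (A u) = u" using Ddef[of _ 0] by simp
  have y0: "y \<noteq> 0" using assms(7) A0 by (metis rangeI)
  have dense: "closure (range A) = UNIV"
  proof -
    have sub: "subspace (range A)"
      unfolding subspace_def
    proof (intro conjI ballI allI)
      show "0 \<in> range A" using A0 by (metis rangeI)
    next
      fix a b assume "a \<in> range A" "b \<in> range A"
      then obtain u v where "a = A u" "b = A v" by auto
      hence "a + b = A (u + v)" using Aadd by simp
      thus "a + b \<in> range A" by auto
    next
      fix r :: real and a assume "a \<in> range A"
      then obtain u where "a = A u" by auto
      hence "r *\<^sub>R a = A (r *\<^sub>R u)" by (simp add: scaleR_scaleC Asc)
      thus "r *\<^sub>R a \<in> range A" by auto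
    qed
    have "z \<in> closure (range A)" for z
    proof -
      obtain p where p: "p \<in> closure (range A)" and orth: "\<forall>w\<in>range A. Re (cinner (z - p) w) = 0"
        using orth_approx[OF sub, of z] by blast
      define e where "e = z - p"
      have ce: "cinner e (A u) = 0" for u
      proof -
        have r: "Re (cinner e (A u)) = 0" using orth e_def by auto
        have "Re (cinner e (A (\<i> *\<^sub>C u))) = 0" using orth e_def by auto
        hence "Im (cinner e (A u)) = 0" by (simp add: Asc cinner_scaleC_right)
        thus ?thesis using r by (simp add: complex_eq_iff)
      qed
      have "cinner (A e) (A e) = 0" using ce sym by simp
      hence "A e = 0" by (rule cinner_self_eq_0)
      hence "e = 0" using assms(4) A0 by (metis injD)
      thus ?thesis using p e_def by simp
    qed
    thus ?thesis by auto
  qed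
  have rangeDom: "range A \<subseteq> Dom" unfolding Dom_def
  proof
    fix a assume "a \<in> range A"
    then obtain u where "a = A u" by auto
    hence "a = A u + 0 *\<^sub>C y" by simp
    thus "a \<in> {A u + c *\<^sub>C y | u c. True}" by blast
  qed
  have sumeq: "\<And>u c v d. (A u + c *\<^sub>C y) + (A v + d *\<^sub>C y) = A (u + v) + (c + d) *\<^sub>C y"
    by (simp add: Aadd scaleC_add_left algebra_simps)
  have scaleeq: "\<And>k u c. k *\<^sub>C (A u + c *\<^sub>C y) = A (k *\<^sub>C u) + (k * c) *\<^sub>C y"
    by (simp add: Asc scaleC_add_right scaleC_scaleC)
  have linD: "clinear_on Dom D"
    unfolding clinear_on_def csubspace_def
  proof (intro conjI ballI allI)
    show "0 \<in> Dom" using rangeDom A0 by (metis rangeI subsetD)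
  next
    fix a b assume "a \<in> Dom" "b \<in> Dom"
    then obtain u c v d where "a = A u + c *\<^sub>C y" "b = A v + d *\<^sub>C y" unfolding Dom_def by blast
    thus "a + b \<in> Dom" "D (a + b) = D a + D b" unfolding Dom_def using sumeq Ddef by auto
  next
    fix k a assume "a \<in> Dom"
    then obtain u c where "a = A u + c *\<^sub>C y" unfolding Dom_def by blast
    thus "k *\<^sub>C a \<in> Dom" "D (k *\<^sub>C a) = k *\<^sub>C D a" unfolding Dom_def using scaleeq Ddef by auto
  qed
  have dd: "densely_defined Dom D"
    unfolding densely_defined_def using linD dense closure_mono[OF rangeDom] by auto
  have closedD: "closed_op Dom D"
    unfolding closed_op_def closed_sequential_limits
  proof (intro allI impI, elim conjE)
    fix s l assume s: "\<forall>n. s n \<in> {(x, D x) |x. x \<in> Dom}" and sl: "s \<longlonglongrightarrow> l"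
    have "\<forall>n. \<exists>u c. s n = (A u + c *\<^sub>C y, u)"
      using s Ddef unfolding Dom_def by fastforce
    then obtain u c where uc: "\<And>n. s n = (A (u n) + c n *\<^sub>C y, u n)" by metis
    have "(\<lambda>n. snd (s n)) \<longlonglongrightarrow> snd l" using sl by (intro tendsto_intros)
    hence ul: "u \<longlonglongrightarrow> snd l" using uc by simp
    have "(\<lambda>n. fst (s n)) \<longlonglongrightarrow> fst l" using sl by (intro tendsto_intros)
    hence fl: "(\<lambda>n. A (u n) + c n *\<^sub>C y) \<longlonglongrightarrow> fst l" using uc by simp
    have Al: "(\<lambda>n. A (u n)) \<longlonglongrightarrow> A (snd l)" using bounded_linear.tendsto[OF lin ul] .
    have cyl: "(\<lambda>n. c n *\<^sub>C y) \<longlonglongrightarrow> fst l - A (snd l)"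
      using tendsto_diff[OF fl Al] by simp
    have "Cauchy c"
    proof (rule metric_CauchyI)
      fix e :: real assume e: "e > 0"
      have "Cauchy (\<lambda>n. c n *\<^sub>C y)" using cyl by (rule LIMSEQ_imp_Cauchy)
      then obtain M where M: "\<forall>i\<ge>M. \<forall>j\<ge>M. dist (c i *\<^sub>C y) (c j *\<^sub>C y) < e * norm y"
        using metric_CauchyD[of _ "e * norm y"] e y0 by fastforce
      show "\<exists>M. \<forall>i\<ge>M. \<forall>j\<ge>M. dist (c i) (c j) < e"
      proof (intro exI allI impI)
        fix i j assume "M \<le> i" "M \<le> j"
        hence "dist (c i *\<^sub>C y) (c j *\<^sub>C y) < e * norm y" using M by auto
        hence "cmod (c i - c j) * norm y < e * norm y"
          by (simp add: dist_norm scaleC_diff_left[symmetric] norm_scaleC)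
        thus "dist (c i) (c j) < e" using y0 by (simp add: dist_norm)
      qed
    qed
    then obtain k where ck: "c \<longlonglongrightarrow> k" using Cauchy_convergent_iff convergent_def by blast
    have "(\<lambda>n. c n *\<^sub>C y) \<longlonglongrightarrow> k *\<^sub>C y"
      using bounded_linear.tendsto[OF bounded_linear_scaleC_left ck] .
    hence "fst l - A (snd l) = k *\<^sub>C y" using cyl LIMSEQ_unique by blast
    hence "l = (A (snd l) + k *\<^sub>C y, D (A (snd l) + k *\<^sub>C y))"
      using Ddef by (metis diff_add_cancel add.commute prod.collapse)
    thus "l \<in> {(x, D x) |x. x \<in> Dom}" unfolding Dom_def by blast
  qed
  have ker: "dim_one (op_kernel Dom D)"
    unfolding dim_one_def
  proof (intro exI conjI)
    show "y \<noteq> 0" by (rule y0)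
    show "op_kernel Dom D = {c *\<^sub>C y |c. True}"
    proof
      show "op_kernel Dom D \<subseteq> {c *\<^sub>C y |c. True}"
      proof
        fix a assume "a \<in> op_kernel Dom D"
        then obtain u c where "a = A u + c *\<^sub>C y" "D a = 0" unfolding op_kernel_def Dom_def by blast
        hence "u = 0" using Ddef by simp
        thus "a \<in> {c *\<^sub>C y |c. True}" using \<open>a = _\<close> A0 by auto
      qed
      show "{c *\<^sub>C y |c. True} \<subseteq> op_kernel Dom D"
      proof
        fix a assume "a \<in> {c *\<^sub>C y |c. True}"
        then obtain c where "a = A 0 + c *\<^sub>C y" using A0 by auto
        thus "a \<in> op_kernel Dom D" unfolding op_kernel_def Dom_def using Ddef by auto
      qed
    qed
  qed
  have sadj: "self_adjoint_op (range A) D"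
    unfolding self_adjoint_op_def densely_defined_def
  proof (intro conjI)
    show "clinear_on (range A) D"
      unfolding clinear_on_def csubspace_def
    proof (intro conjI ballI allI)
      show "0 \<in> range A" using A0 by (metis rangeI)
    next
      fix a b assume "a \<in> range A" "b \<in> range A"
      then obtain u v where "a = A u" "b = A v" by auto
      hence e: "a + b = A (u + v)" using Aadd by simp
      show "a + b \<in> range A" using e by auto
      show "D (a + b) = D a + D b" using e DA \<open>a = A u\<close> \<open>b = A v\<close> by simp
    next
      fix k a assume "a \<in> range A"
      then obtain u where "a = A u" by auto
      hence e: "k *\<^sub>C a = A (k *\<^sub>C u)" using Asc by simp
      show "k *\<^sub>C a \<in> range A" using e by auto
      show "D (k *\<^sub>C a) = k *\<^sub>C D a" using e DA \<open>a = A u\<close> by simp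
    qed
    show "closure (range A) = UNIV" by (rule dense)
    show "\<forall>a\<in>range A. \<forall>b\<in>range A. cinner (D a) b = cinner a (D b)"
      using DA sym by auto
    show "adjoint_dom (range A) D = range A"
    proof
      show "adjoint_dom (range A) D \<subseteq> range A"
      proof
        fix b assume "b \<in> adjoint_dom (range A) D"
        then obtain z where z: "\<forall>a\<in>range A. cinner (D a) b = cinner a z"
          unfolding adjoint_dom_def by blast
        have "cinner u (b - A z) = 0" for u
          using z[rule_format, of "A u"] DA sym by (simp add: cinner_diff_right)
        hence "cinner (b - A z) (b - A z) = 0" by blast
        hence "b = A z" using cinner_self_eq_0 by force
        thus "b \<in> range A" by auto
      qed
      show "range A \<subseteq> adjoint_dom (range A) D"
      proof
        fix b assume "b \<in> range A"
        then obtain v where "b = A v" by auto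
        hence "\<forall>a\<in>range A. cinner (D a) b = cinner a v" using DA sym by auto
        thus "b \<in> adjoint_dom (range A) D" unfolding adjoint_dom_def by blast
      qed
    qed
  qed
  have cres: "compact_resolvent (range A) D"
    unfolding compact_resolvent_def
    by (rule exI[of _ 0], rule exI[of _ A]) (use assms(2) DA in auto)
  have Vb: "bounded_clinear V" using assms(6) unfolding V_def quasi_nilpotent_def by simp
  have cV: "compact_op V"
  proof -
    obtain K1 where K1: "\<And>u. norm (V u) \<le> norm u * K1" using Vb unfolding bounded_clinear_def by blast
    obtain K2 where K2: "\<And>u. norm (A u) \<le> norm u * K2" using sa unfolding bounded_clinear_def by blast
    define B where "B = (\<bar>K1\<bar> + \<bar>K2\<bar>) / norm y"
    have cb: "cmod (cinner u x) \<le> B" if u: "u \<in> ball 0 1" for u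
    proof -
      have nu: "norm u \<le> 1" using u by simp
      have "cmod (cinner u x) * norm y = norm (V u - A u)" by (simp add: V_def norm_scaleC)
      also have "\<dots> \<le> norm (V u) + norm (A u)" by (rule norm_triangle_ineq4)
      also have "\<dots> \<le> norm u * K1 + norm u * K2" using K1 K2 by (intro add_mono)
      also have "\<dots> \<le> norm u * \<bar>K1\<bar> + norm u * \<bar>K2\<bar>" by (intro add_mono mult_left_mono) auto
      also have "\<dots> \<le> 1 * \<bar>K1\<bar> + 1 * \<bar>K2\<bar>" using nu by (intro add_mono mult_right_mono) auto
      finally show ?thesis unfolding B_def using y0 by (simp add: field_simps)
    qed
    define T1 where "T1 = closure (A ` ball 0 1)"
    define T2 where "T2 = (\<lambda>c. c *\<^sub>C y) ` cball 0 B"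
    have c1: "compact T1" using assms(2) unfolding T1_def compact_op_def by simp
    have c2: "compact T2" unfolding T2_def
      by (intro compact_continuous_image compact_cball linear_continuous_on bounded_linear_scaleC_left)
    define T where "T = {a + b | a b. a \<in> T1 \<and> b \<in> T2}"
    have cT: "compact T" unfolding T_def using compact_sums[OF c1 c2] .
    have "V ` ball 0 1 \<subseteq> T"
    proof
      fix a assume "a \<in> V ` ball 0 1"
      then obtain u where u: "u \<in> ball 0 1" "a = A u + cinner u x *\<^sub>C y" unfolding V_def by auto
      have "A u \<in> T1" unfolding T1_def using u(1) closure_subset by blast
      moreover have "cinner u x *\<^sub>C y \<in> T2" unfolding T2_def using cb[OF u(1)] by auto
      ultimately show "a \<in> T" unfolding T_def using u(2) by blast
    qed
    hence "closure (V ` ball 0 1) \<subseteq> T" using cT by (intro closure_minimal compact_imp_closed)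
    hence "closure (V ` ball 0 1) = T \<inter> closure (V ` ball 0 1)" by blast
    moreover have "compact (T \<inter> closure (V ` ball 0 1))" using cT by (intro compact_Int_closed) auto
    ultimately have "compact (closure (V ` ball 0 1))" by simp
    thus ?thesis using Vb unfolding compact_op_def bounded_clinear_def by simp
  qed
  have spV: "spectrum V = {0}" using assms(6) unfolding V_def quasi_nilpotent_def by simp
  have "admissible Dom D V"
    unfolding admissible_def
  proof (intro conjI)
    show "densely_defined Dom D" by (rule dd)
    show "closed_op Dom D" by (rule closedD)
    show "dim_one (op_kernel Dom D)" by (rule ker)
    show "\<exists>Dom0\<subseteq>Dom. self_adjoint_op Dom0 D \<and> compact_resolvent Dom0 D"
      using rangeDom sadj cres by blast
    show "compact_op V" by (rule cV)
    show "spectrum V = {0}" by (rule spV)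
    show "\<forall>u. V u \<in> Dom" unfolding V_def Dom_def by blast
    show "\<forall>u. D (V u) = u" unfolding V_def using Ddef by simp
  qed
  thus ?thesis unfolding V_def Dom_def .
qed

end
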